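(* Let $V:\mathbb{R}^d\to\mathbb{R}^n$ be continuously differentiable and $h$-homogeneous, and assume there are constants $c,s,r,C>0$ with $c\Vert\theta\Vert^s\le\Vert V(\theta)\Vert_\mu\le C\Vert\theta\Vert^r$ for all $\theta$. Let $B=\frac{\Vert (I-\gamma P)V^*\Vert_\mu}{1-\gamma}=\frac{\Vert R\Vert_\mu}{1-\gamma}$. Then for any initial condition $\theta(0)=\theta_0$, if $\theta(t)$ follows the dynamics $$\dot\theta=-\nabla V(\theta)^T A\,(V(\theta)-V^* ),$$ we have $\limsup_{t\to\infty}\Vert V(\theta(t))\Vert_\mu\le C(B/c)^{r/s}$.
   Context: A Markov reward process has finite state space $\mathcal{S}$ with $|\mathcal{S}|=n$, transition matrix $P$ (entries $P(s'|s)$) defining an irreducible, aperiodic Markov chain with stationary distribution $\mu$, a finite reward function $r(s,s')$, and discount factor $\gamma\in[0,1)$. Let $R\in\mathbb{R}^n$ be $R(s)=\mathbb{E}_{s'\sim P(\cdot|s)}[r(s,s')]$, and let $V^*\in\mathbb{R}^n$ be the unique solution of $V^*=R+\gamma PV^*$. Let $D_\mu$ be the diagonal matrix with $\mu$ on the diagonal and $A:=D_\mu(I-\gamma P)$. For $x\in\mathbb{R}^n$, $\Vert x\Vert_\mu^2=x^TD_\mu x$; $\Vert\theta\Vert$ is the Euclidean norm. $\nabla V(\theta)$ is the $n\times d$ Jacobian of $V$. A differentiable function $f:\mathbb{R}^k\to\mathbb{R}^m$ is called $h$-homogeneous (for $h\in\mathbb{R}$) if $f(x)=h\,\nabla f(x)\,x$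 for all $x$. *)

theory Defs
  imports "HOL-Analysis.Analysis"
begin

text \<open>States are indexed by a finite type 'n; P$s$s' is the probability P(s'|s).\<close>

definition mat_pow :: "real^'n^'n \<Rightarrow> nat \<Rightarrow> real^'n^'n" where
  "mat_pow P k = ((\<lambda>M. M ** P) ^^ k) (mat 1)"

definition stochastic :: "real^'n^'n \<Rightarrow> bool" where
  "stochastic P \<longleftrightarrow> (\<forall>s s'. P$s$s' \<ge> 0) \<and> (\<forall>s. (\<Sum>s'\<in>UNIV. P$s$s') = 1)"

definition irreducible_chain :: "real^'n^'n \<Rightarrow> bool" where
  "irreducible_chain P \<longleftrightarrow> (\<forall>s s'. \<exists>k>0. mat_pow P k $ s $ s' > 0)"

definition aperiodic_chain :: "real^'n^'n \<Rightarrow> bool" where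
  "aperiodic_chain P \<longleftrightarrow> (\<forall>s. Gcd {k::nat. k > 0 \<and> mat_pow P k $ s $ s > 0} = 1)"

definition stationary_distribution :: "real^'n^'n \<Rightarrow> real^'n \<Rightarrow> bool" where
  "stationary_distribution P \<mu> \<longleftrightarrow> (\<forall>s. \<mu>$s \<ge> 0) \<and> (\<Sum>s\<in>UNIV. \<mu>$s) = 1 \<and> \<mu> v* P = \<mu>"

definition exp_reward :: "real^'n^'n \<Rightarrow> ('n \<Rightarrow> 'n \<Rightarrow> real) \<Rightarrow> real^'n" where
  "exp_reward P r = (\<chi> s. \<Sum>s'\<in>UNIV. P$s$s' * r s s')"

definition mu_norm :: "real^'n \<Rightarrow> real^'n \<Rightarrow> real" where
  "mu_norm \<mu> x = sqrt (\<Sum>s\<in>UNIV. \<mu>$s * (x$s)^2)"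

definition diag_mat :: "real^'n \<Rightarrow> real^'n^'n" where
  "diag_mat \<mu> = (\<chi> i j. if i = j then \<mu>$i else 0)"

definition A_mat :: "real^'n \<Rightarrow> real \<Rightarrow> real^'n^'n \<Rightarrow> real^'n^'n" where
  "A_mat \<mu> \<gamma> P = diag_mat \<mu> ** (mat 1 - \<gamma> *\<^sub>R P)"

definition homogeneous_with :: "real \<Rightarrow> (real^'d \<Rightarrow> real^'n) \<Rightarrow> (real^'d \<Rightarrow> real^'d^'n) \<Rightarrow> bool" where
  "homogeneous_with h f J \<longleftrightarrow> (\<forall>x. f x = h *\<^sub>R (J x *v x))"

end

theory Submission imports Defs begin

lemma A_apply: "(A_mat \<mu> \<gamma> P *v x)$i = \<mu>$i * (x$i - \<gamma> * (P *v x)$i)"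
proof -
  have "A_mat \<mu> \<gamma> P *v x = diag_mat \<mu> *v ((mat 1 - \<gamma> *\<^sub>R P) *v x)"
    by (simp add: A_mat_def matrix_vector_mul_assoc)
  also have "(mat 1 - \<gamma> *\<^sub>R P) *v x = x - \<gamma> *\<^sub>R (P *v x)"
    by (simp add: matrix_vector_mult_diff_rdistrib scaleR_matrix_vector_assoc)
  finally have e: "A_mat \<mu> \<gamma> P *v x = diag_mat \<mu> *v (x - \<gamma> *\<^sub>R (P *v x))" .
  have "\<And>y. (diag_mat \<mu> *v y)$i = \<mu>$i * y$i"
  proof -
    fix y :: "real^'a"
    have "(diag_mat \<mu> *v y)$i = (\<Sum>j\<in>UNIV. (if i = j then \<mu>$i else 0) * y$j)"
      by (simp add: diag_mat_def matrix_vector_mult_def)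
    also have "\<dots> = (\<Sum>j\<in>UNIV. if i = j then \<mu>$i * y$j else 0)" by (rule sum.cong) auto
    finally show "(diag_mat \<mu> *v y)$i = \<mu>$i * y$i" by simp
  qed
  then show ?thesis by (simp add: e)
qed


lemma inner_transpose: "(y::real^'d) \<bullet> (transpose M *v w) = (M *v y) \<bullet> w"
  by (metis transpose_matrix_vector dot_lmul_matrix inner_commute)

lemma jensen_row:
  assumes "stochastic P"
  shows "((P *v v)$i)^2 \<le> (\<Sum>j\<in>UNIV. P$i$j * (v$j)^2)"
proof -
  define m where "m = (P *v v)$i"
  have m: "m = (\<Sum>j\<in>UNIV. P$i$j * v$j)" by (simp add: m_def matrix_vector_mult_def)
  have s1: "(\<Sum>j\<in>UNIV. P$i$j) = 1" using assms by (simp add: stochastic_def)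
  have "0 \<le> (\<Sum>j\<in>UNIV. P$i$j * (v$j - m)^2)"
    using assms by (intro sum_nonneg) (simp add: stochastic_def)
  also have "\<dots> = (\<Sum>j\<in>UNIV. P$i$j * (v$j)^2) - 2 * m * (\<Sum>j\<in>UNIV. P$i$j * v$j) + m^2 * (\<Sum>j\<in>UNIV. P$i$j)"
    by (simp add: power2_diff algebra_simps sum.distrib sum_subtractf sum_distrib_left sum_distrib_right)
  finally show ?thesis using m s1 by (simp add: m_def power2_eq_square)
qed


lemma PV_bound:
  fixes P :: "real^'n^'n" and \<mu> v :: "real^'n"
  assumes "stochastic P" "stationary_distribution P \<mu>"
  shows "(\<Sum>i\<in>UNIV. \<mu>$i * v$i * (P *v v)$i) \<le> (\<Sum>i\<in>UNIV. \<mu>$i * (v$i)^2)"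
proof -
  have mu0: "\<And>i. \<mu>$i \<ge> 0" using assms by (simp add: stationary_distribution_def)
  have st: "\<And>j. (\<Sum>i\<in>UNIV. P$i$j * \<mu>$i) = \<mu>$j"
  proof -
    fix j
    have "(\<mu> v* P)$j = \<mu>$j" using assms(2) by (simp add: stationary_distribution_def)
    then show "(\<Sum>i\<in>UNIV. P$i$j * \<mu>$i) = \<mu>$j" by (simp add: vector_matrix_mult_def mult.commute)
  qed
  have "(\<Sum>i\<in>UNIV. \<mu>$i * ((P *v v)$i)^2) \<le> (\<Sum>i\<in>UNIV. \<mu>$i * (\<Sum>j\<in>UNIV. P$i$j * (v$j)^2))"
    by (intro sum_mono mult_left_mono jensen_row assms mu0)
  also have "\<dots> = (\<Sum>j\<in>UNIV. (\<Sum>i\<in>UNIV. P$i$j * \<mu>$i) * (v$j)^2)"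
    unfolding sum_distrib_left sum_distrib_right
    by (subst sum.swap) (simp add: mult_ac)
  also have "\<dots> = (\<Sum>j\<in>UNIV. \<mu>$j * (v$j)^2)" by (simp add: st)
  finally have 1: "(\<Sum>i\<in>UNIV. \<mu>$i * ((P *v v)$i)^2) \<le> (\<Sum>i\<in>UNIV. \<mu>$i * (v$i)^2)" .
  have "(\<Sum>i\<in>UNIV. \<mu>$i * v$i * (P *v v)$i) \<le> (\<Sum>i\<in>UNIV. (\<mu>$i * (v$i)^2 + \<mu>$i * ((P *v v)$i)^2) / 2)"
  proof (intro sum_mono)
    fix i
    have "0 \<le> \<mu>$i * (v$i - (P *v v)$i)^2" using mu0 by simp
    then show "\<mu>$i * v$i * (P *v v)$i \<le> (\<mu>$i * (v$i)^2 + \<mu>$i * ((P *v v)$i)^2) / 2"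
      by (simp add: power2_diff algebra_simps)
  qed
  also have "\<dots> = ((\<Sum>i\<in>UNIV. \<mu>$i * (v$i)^2) + (\<Sum>i\<in>UNIV. \<mu>$i * ((P *v v)$i)^2)) / 2"
    by (simp add: sum.distrib sum_divide_distrib[symmetric])
  finally have 2: "(\<Sum>i\<in>UNIV. \<mu>$i * v$i * (P *v v)$i) \<le> ((\<Sum>i\<in>UNIV. \<mu>$i * (v$i)^2) + (\<Sum>i\<in>UNIV. \<mu>$i * ((P *v v)$i)^2)) / 2" .
  have aux: "\<And>x a b::real. x \<le> (a+b)/2 \<Longrightarrow> b \<le> a \<Longrightarrow> x \<le> a" by (simp add: field_simps)
  show ?thesis by (rule aux[OF 2 1])
qed


lemma CS_mu:
  fixes \<mu> v w :: "real^'n"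
  assumes "\<And>i. \<mu>$i \<ge> 0"
  shows "(\<Sum>i\<in>UNIV. \<mu>$i * v$i * w$i) \<le> mu_norm \<mu> v * mu_norm \<mu> w"
proof -
  define a where "a = (\<chi> i. sqrt (\<mu>$i) * v$i)"
  define b where "b = (\<chi> i. sqrt (\<mu>$i) * w$i)"
  have "a \<bullet> b = (\<Sum>i\<in>UNIV. \<mu>$i * v$i * w$i)"
    using assms by (simp add: a_def b_def inner_vec_def algebra_simps)
  moreover have "norm a = mu_norm \<mu> v" "norm b = mu_norm \<mu> w"
    using assms by (simp_all add: a_def b_def norm_eq_sqrt_inner inner_vec_def mu_norm_def power2_eq_square algebra_simps)
  ultimately show ?thesis using norm_cauchy_schwarz[of a b] by simp
qed


lemma h_pos:
  fixes V :: "real^'d \<Rightarrow> real^'n" and J :: "real^'d \<Rightarrow> real^'d^'n" and \<mu> :: "real^'n"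
  assumes V_deriv: "\<And>x. (V has_derivative (\<lambda>v. J x *v v)) (at x)"
    and mu0: "\<And>k. \<mu>$k \<ge> 0"
    and V_hom: "homogeneous_with h V J"
    and pos: "c > 0" "s > 0" "C > 0"
    and bounds: "\<And>x. c * norm x powr s \<le> mu_norm \<mu> (V x)"
                "\<And>x. mu_norm \<mu> (V x) \<le> C * norm x powr r'"
  shows "h > 0"
proof (rule ccontr)
  assume "\<not> h > 0"
  hence hle: "h \<le> 0" by simp
  define x :: "real^'d" where "x = axis undefined 1"
  have nx: "norm x = 1" by (simp add: x_def)
  have hom: "\<And>y. V y = h *\<^sub>R (J y *v y)" using V_hom by (simp add: homogeneous_with_def)
  have "h \<noteq> 0"
  proof
    assume "h = 0"
    then have "V x = 0" using hom by simp
    then have "mu_norm \<mu> (V x) = 0" by (simp add: mu_norm_def)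
    with bounds(1)[of x] nx pos show False by simp
  qed
  with hle have hneg: "h < 0" by simp
  define q where "q t = (\<Sum>k\<in>UNIV. \<mu>$k * (V (t *\<^sub>R x) $ k)^2)" for t
  have dq: "(q has_real_derivative (2 / (h * t)) * q t) (at t)" if "t > 0" for t
  proof -
    have dV: "((\<lambda>t. V (t *\<^sub>R x)) has_derivative (\<lambda>u. J (t *\<^sub>R x) *v (u *\<^sub>R x))) (at t)"
      by (rule has_derivative_compose[OF _ V_deriv]) (auto intro!: derivative_eq_intros)
    have Jx: "J (t *\<^sub>R x) *v x = (1 / (h * t)) *\<^sub>R V (t *\<^sub>R x)"
      using hom[of "t *\<^sub>R x"] \<open>h \<noteq> 0\<close> that by (simp add: matrix_vector_mult_scaleR)
    have dk: "((\<lambda>t. V (t *\<^sub>R x) $ k) has_real_derivative (J (t *\<^sub>R x) *v x) $ k) (at t)" for k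
    proof -
      have "((\<lambda>t. V (t *\<^sub>R x) $ k) has_derivative (\<lambda>u. (J (t *\<^sub>R x) *v (u *\<^sub>R x)) $ k)) (at t)"
        by (rule bounded_linear.has_derivative[OF bounded_linear_vec_nth dV])
      moreover have "(\<lambda>u. (J (t *\<^sub>R x) *v (u *\<^sub>R x)) $ k) = (*) ((J (t *\<^sub>R x) *v x) $ k)"
        by (rule ext) (simp add: matrix_vector_mult_scaleR mult.commute)
      ultimately show ?thesis by (simp add: has_field_derivative_def)
    qed
    have "(q has_real_derivative (\<Sum>k\<in>UNIV. \<mu>$k * (2 * V (t *\<^sub>R x) $ k * (J (t *\<^sub>R x) *v x) $ k))) (at t)"
      unfolding q_def by (auto intro!: derivative_eq_intros dk simp: mult_ac)
    moreover have "(\<Sum>k\<in>UNIV. \<mu>$k * (2 * V (t *\<^sub>R x) $ k * (J (t *\<^sub>R x) *v x) $ k)) = (2 / (h * t)) * q t"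
      by (simp add: Jx q_def sum_distrib_left power2_eq_square mult_ac)
    ultimately show ?thesis by simp
  qed
  define T where "T = (C / c + 1) powr (1 / s)"
  have T1: "T \<ge> 1" using pos by (simp add: T_def ge_one_powr_ge_zero)
  have Ts: "T powr s = C / c + 1" using pos by (simp add: T_def powr_powr)
  have "q T \<le> q 1"
  proof (rule DERIV_nonpos_imp_nonincreasing[OF T1])
    fix y assume y: "1 \<le> y" "y \<le> T"
    have "q y \<ge> 0" unfolding q_def using mu0 by (auto intro!: sum_nonneg)
    moreover have "2 / (h * y) \<le> 0" using hneg y by (simp add: divide_nonpos_neg mult_nonpos_nonneg)
    ultimately show "\<exists>d. (q has_real_derivative d) (at y) \<and> d \<le> 0"
      using dq[of y] y by (intro exI[of _ "(2 / (h * y)) * q y"]) (auto simp: divide_nonneg_nonpos)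
  qed
  have mq: "mu_norm \<mu> (V (t *\<^sub>R x)) = sqrt (q t)" for t by (simp add: mu_norm_def q_def)
  have "c * T powr s \<le> mu_norm \<mu> (V (T *\<^sub>R x))" using bounds(1)[of "T *\<^sub>R x"] nx T1 by simp
  also have "\<dots> \<le> mu_norm \<mu> (V (1 *\<^sub>R x))" unfolding mq using \<open>q T \<le> q 1\<close> by simp
  also have "\<dots> \<le> C" using bounds(2)[of x] nx by simp
  finally have "c * (C / c + 1) \<le> C" using Ts by simp
  then show False using pos by (simp add: field_simps) (use mult_pos_pos[OF pos(1) pos(1)] in linarith)
qed


lemma G_bound:
  fixes P :: "real^'n^'n" and \<mu> v Vstar R :: "real^'n"
  assumes st: "stochastic P" and mu: "stationary_distribution P \<mu>" and g: "0 \<le> \<gamma>"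
    and VS: "Vstar = R + \<gamma> *\<^sub>R (P *v Vstar)"
  shows "(1 - \<gamma>) * (mu_norm \<mu> v)^2 - mu_norm \<mu> v * mu_norm \<mu> R \<le> v \<bullet> (A_mat \<mu> \<gamma> P *v (v - Vstar))"
proof -
  have mu0: "\<And>i. \<mu>$i \<ge> 0" using mu by (simp add: stationary_distribution_def)
  have Ri: "R$i = Vstar$i - \<gamma> * (P *v Vstar)$i" for i
  proof -
    have "Vstar$i = R$i + \<gamma> * (P *v Vstar)$i" using arg_cong[OF VS, of "\<lambda>x. x$i"] by simp
    then show ?thesis by simp
  qed
  have comp: "v$i * (A_mat \<mu> \<gamma> P *v (v - Vstar))$i = \<mu>$i*(v$i)^2 - \<gamma>*(\<mu>$i* v$i*(P*v v)$i) - \<mu>$i* v$i*R$i" for i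
    unfolding A_apply Ri matrix_vector_mult_diff_distrib vector_minus_component power2_eq_square by (simp add: right_diff_distrib mult_ac)
  have e: "v \<bullet> (A_mat \<mu> \<gamma> P *v (v - Vstar)) = (\<Sum>i\<in>UNIV. \<mu>$i*(v$i)^2) - \<gamma> * (\<Sum>i\<in>UNIV. \<mu>$i* v$i*(P*v v)$i) - (\<Sum>i\<in>UNIV. \<mu>$i* v$i*R$i)"
    by (simp add: inner_vec_def comp sum_subtractf sum_distrib_left)
  have m2: "(mu_norm \<mu> v)^2 = (\<Sum>i\<in>UNIV. \<mu>$i*(v$i)^2)"
    unfolding mu_norm_def using mu0 by (simp add: sum_nonneg)
  have p: "\<gamma> * (\<Sum>i\<in>UNIV. \<mu>$i* v$i*(P*v v)$i) \<le> \<gamma> * (\<Sum>i\<in>UNIV. \<mu>$i*(v$i)^2)"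
    by (rule mult_left_mono[OF PV_bound[OF st mu] g])
  have c: "(\<Sum>i\<in>UNIV. \<mu>$i* v$i*R$i) \<le> mu_norm \<mu> v * mu_norm \<mu> R" by (rule CS_mu[OF mu0])
  show ?thesis unfolding e using p c m2 by (simp add: algebra_simps)
qed

theorem mainTheorem2:
  fixes P :: "real^'n^'n" and \<mu> :: "real^'n" and r :: "'n \<Rightarrow> 'n \<Rightarrow> real"
    and \<gamma> :: real and Vstar :: "real^'n"
    and V :: "real^'d \<Rightarrow> real^'n" and J :: "real^'d \<Rightarrow> real^'d^'n"
    and h c s r' C :: real
    and \<theta> :: "real \<Rightarrow> real^'d" and \<theta>0 :: "real^'d"
  assumes P_stoch: "stochastic P"
    and P_irr: "irreducible_chain P"
    and P_aper: "aperiodic_chain P"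
    and mu_stat: "stationary_distribution P \<mu>"
    and gamma: "0 \<le> \<gamma>" "\<gamma> < 1"
    and Vstar: "Vstar = exp_reward P r + \<gamma> *\<^sub>R (P *v Vstar)"
    and V_deriv: "\<And>x. (V has_derivative (\<lambda>v. J x *v v)) (at x)"
    and J_cont: "continuous_on UNIV J"
    and V_hom: "homogeneous_with h V J"
    and pos: "c > 0" "s > 0" "r' > 0" "C > 0"
    and bounds: "\<And>x. c * norm x powr s \<le> mu_norm \<mu> (V x)"
                "\<And>x. mu_norm \<mu> (V x) \<le> C * norm x powr r'"
    and init: "\<theta> 0 = \<theta>0"
    and ode: "\<And>t. t \<ge> 0 \<Longrightarrow>
       (\<theta> has_vector_derivative
          (- (transpose (J (\<theta> t)) *v (A_mat \<mu> \<gamma> P *v (V (\<theta> t) - Vstar)))))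
       (at t within {0..})"
  shows "Limsup at_top (\<lambda>t. ereal (mu_norm \<mu> (V (\<theta> t))))
           \<le> ereal (C * ((mu_norm \<mu> (exp_reward P r) / (1 - \<gamma>)) / c) powr (r' / s))"
proof -
  have mu0: "\<And>i. \<mu>$i \<ge> 0" using mu_stat by (simp add: stationary_distribution_def)
  have hpos: "h > 0" by (rule h_pos[OF V_deriv mu0 V_hom pos(1) pos(2) pos(4) bounds])
  have hom: "\<And>y. V y = h *\<^sub>R (J y *v y)" using V_hom by (simp add: homogeneous_with_def)
  define R where "R = exp_reward P r"
  define B where "B = mu_norm \<mu> R / (1 - \<gamma>)"
  define A where "A = A_mat \<mu> \<gamma> P"
  define F where "F t = - (transpose (J (\<theta> t)) *v (A *v (V (\<theta> t) - Vstar)))" for t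
  define D where "D t = 2 * (\<theta> t \<bullet> F t)" for t
  define L where "L t = \<theta> t \<bullet> \<theta> t" for t
  have g1: "1 - \<gamma> > 0" using gamma by simp
  have Rn: "mu_norm \<mu> R = (1 - \<gamma>) * B" using g1 by (simp add: B_def)
  have mn0: "mu_norm \<mu> x \<ge> 0" for x unfolding mu_norm_def using mu0 by (simp add: sum_nonneg)
  have B0: "B \<ge> 0" unfolding B_def using g1 mn0[of R] by simp
  have dL: "(L has_real_derivative D t) (at t)" if "t > 0" for t
  proof -
    have "(\<theta> has_vector_derivative F t) (at t within {0<..})"
      unfolding F_def A_def
      by (rule has_vector_derivative_within_subset[OF ode[of t]]) (use that in auto)
    then have d: "(\<theta> has_derivative (\<lambda>u. u *\<^sub>R F t)) (at t)"
      using that at_within_open[of t "{0<..}"] by (simp add: has_vector_derivative_def)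
    have "(L has_derivative (\<lambda>u. \<theta> t \<bullet> (u *\<^sub>R F t) + (u *\<^sub>R F t) \<bullet> \<theta> t)) (at t)"
      unfolding L_def by (rule has_derivative_inner[OF d d])
    moreover have "(\<lambda>u. \<theta> t \<bullet> (u *\<^sub>R F t) + (u *\<^sub>R F t) \<bullet> \<theta> t) = (*) (D t)"
      by (rule ext) (simp add: D_def inner_commute)
    ultimately show ?thesis by (simp add: has_field_derivative_def)
  qed
  have Lcont: "continuous_on {a..b} L" if "a > 0" for a b
    using that by (intro continuous_at_imp_continuous_on ballI DERIV_isCont[OF dL]) auto
  have L0: "L t \<ge> 0" for t by (simp add: L_def)
  have Lnorm: "L t = (norm (\<theta> t))^2" for t by (simp add: L_def power2_norm_eq_inner)
  have Dbound: "D t \<le> -(2/h) * ((1 - \<gamma>) * (mu_norm \<mu> (V (\<theta> t)) * (mu_norm \<mu> (V (\<theta> t)) - B)))" for t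
  proof -
    define w where "w = A *v (V (\<theta> t) - Vstar)"
    have Jth: "J (\<theta> t) *v \<theta> t = (1/h) *\<^sub>R V (\<theta> t)" using hom[of "\<theta> t"] hpos by simp
    have De: "D t = -(2/h) * (V (\<theta> t) \<bullet> w)"
      unfolding D_def F_def w_def[symmetric] inner_minus_right inner_transpose Jth by simp
    have Ge: "(1 - \<gamma>) * (mu_norm \<mu> (V (\<theta> t)))^2 - mu_norm \<mu> (V (\<theta> t)) * mu_norm \<mu> R \<le> V (\<theta> t) \<bullet> w"
      unfolding w_def A_def by (rule G_bound[OF P_stoch mu_stat gamma(1) Vstar[folded R_def]])
    have "(2/h) * ((1 - \<gamma>) * (mu_norm \<mu> (V (\<theta> t)))^2 - mu_norm \<mu> (V (\<theta> t)) * mu_norm \<mu> R) \<le> (2/h) * (V (\<theta> t) \<bullet> w)"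
      by (rule mult_left_mono[OF Ge]) (use hpos in simp)
    then have "D t \<le> -(2/h) * ((1 - \<gamma>) * (mu_norm \<mu> (V (\<theta> t)))^2 - mu_norm \<mu> (V (\<theta> t)) * mu_norm \<mu> R)"
      unfolding De by linarith
    then show ?thesis by (simp add: Rn power2_eq_square algebra_simps)
  qed
  have ev: "\<exists>T. \<forall>t\<ge>T. norm (\<theta> t) \<le> \<rho>" if rho: "\<rho> > 0" "c * \<rho> powr s > B" for \<rho>
  proof -
    define B' where "B' = c * \<rho> powr s"
    define \<delta> where "\<delta> = (2/h) * ((1 - \<gamma>) * (B' * (B' - B)))"
    have B'pos: "B' > B" using rho by (simp add: B'_def)
    have \<delta>pos: "\<delta> > 0" unfolding \<delta>_def using hpos g1 B'pos B0 by (intro mult_pos_pos) auto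
    have key: "D t \<le> - \<delta>" if "L t > \<rho>^2" for t
    proof -
      have "\<rho>^2 < (norm (\<theta> t))^2" using that Lnorm by simp
      then have nr: "\<rho> \<le> norm (\<theta> t)" using rho by (meson less_imp_le power_less_imp_less_base norm_ge_zero)
      define m where "m = mu_norm \<mu> (V (\<theta> t))"
      have "B' \<le> c * norm (\<theta> t) powr s"
        unfolding B'_def using pos rho nr by (intro mult_left_mono powr_mono2) auto
      also have "\<dots> \<le> m" unfolding m_def by (rule bounds(1))
      finally have mB: "B' \<le> m" .
      have "B' * (B' - B) \<le> m * (m - B)" using mB B'pos B0 by (intro mult_mono) auto
      then have l1: "(1 - \<gamma>) * (B' * (B' - B)) \<le> (1 - \<gamma>) * (m * (m - B))" using g1 by simp
      have "(2/h) * ((1 - \<gamma>) * (B' * (B' - B))) \<le> (2/h) * ((1 - \<gamma>) * (m * (m - B)))"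
        by (rule mult_left_mono[OF l1]) (use hpos in simp)
      then show ?thesis using Dbound[of t] unfolding \<delta>_def m_def by linarith
    qed
    obtain T where T: "T \<ge> 1" "L T \<le> \<rho>^2"
    proof (rule ccontr)
      assume "\<not> thesis"
      with that have all: "\<And>t. t \<ge> 1 \<Longrightarrow> L t > \<rho>^2" by force
      define t1 where "t1 = 2 + L 1 / \<delta>"
      have "L 1 / \<delta> \<ge> 0" using L0[of 1] \<delta>pos by simp
      then have t1: "1 < t1" by (simp add: t1_def)
      obtain z where z: "1 < z" "z < t1" "L t1 - L 1 = (t1 - 1) * D z"
        using MVT2[OF t1, of L D] dL by force
      have "D z \<le> - \<delta>" using key all z by force
      then have "(t1 - 1) * D z \<le> (t1 - 1) * (- \<delta>)" using t1 by (intro mult_left_mono) auto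
      also have "\<dots> = - \<delta> - L 1" using \<delta>pos by (simp add: t1_def field_simps)
      finally have "L t1 \<le> - \<delta>" using z by linarith
      then show False using L0[of t1] \<delta>pos by linarith
    qed
    have "norm (\<theta> t1) \<le> \<rho>" if t1T: "t1 \<ge> T" for t1
    proof (rule ccontr)
      assume "\<not> norm (\<theta> t1) \<le> \<rho>"
      then have "\<rho>^2 < (norm (\<theta> t1))^2" using rho by (intro power_strict_mono) auto
      then have Lt1: "L t1 > \<rho>^2" using Lnorm by simp
      define S where "S = {T..t1} \<inter> L -` {..\<rho>^2}"
      have clS: "closed S" unfolding S_def
        using T(1) by (intro continuous_closed_preimage Lcont) auto
      have TS: "T \<in> S" using T t1T by (simp add: S_def)
      have bdd: "bdd_above S" unfolding S_def by (rule bdd_aboveI[of _ t1]) auto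
      define t0 where "t0 = Sup S"
      have t0S: "t0 \<in> S" unfolding t0_def using closed_contains_Sup[OF _ bdd clS] TS by blast
      then have t0: "T \<le> t0" "t0 \<le> t1" "L t0 \<le> \<rho>^2" by (auto simp: S_def)
      have lt: "t0 < t1" using t0 Lt1 by (cases "t0 = t1") auto
      obtain z where z: "t0 < z" "z < t1" "L t1 - L t0 = (t1 - t0) * D z"
        using MVT2[OF lt, of L D] dL t0 T by force
      have "L z > \<rho>^2"
      proof (rule ccontr)
        assume "\<not> L z > \<rho>^2"
        then have "z \<in> S" using z t0 by (auto simp: S_def)
        then have "z \<le> t0" unfolding t0_def using bdd by (rule cSup_upper)
        then show False using z by simp
      qed
      then have "D z < 0" using key \<delta>pos by force
      then have "(t1 - t0) * D z < 0" using lt by (simp add: mult_pos_neg)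
      then show False using z t0 Lt1 by linarith
    qed
    then show ?thesis by blast
  qed
  define tgt where "tgt = C * ((mu_norm \<mu> (exp_reward P r) / (1 - \<gamma>)) / c) powr (r' / s)"
  have tgt: "tgt = C * (B / c) powr (r' / s)" by (simp add: tgt_def B_def R_def)
  show ?thesis
    unfolding tgt_def[symmetric]
  proof (rule ereal_le_epsilon2)
    fix \<eta> :: real assume eta: "\<eta> > 0"
    define \<beta> where "\<beta> = B / c"
    have \<beta>0: "\<beta> \<ge> 0" using B0 pos by (simp add: \<beta>_def)
    define \<rho> where "\<rho> = ((tgt + \<eta>) / C) powr (1 / r')"
    have tgt0: "tgt \<ge> 0" using pos by (simp add: tgt)
    have rpos: "\<rho> > 0" using tgt0 eta pos by (simp add: \<rho>_def)
    have rr: "\<rho> powr r' = (tgt + \<eta>) / C" using tgt0 eta pos by (simp add: \<rho>_def powr_powr)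
    have Crr: "C * \<rho> powr r' = tgt + \<eta>" using rr pos by simp
    have gt: "\<rho> > \<beta> powr (1 / s)"
    proof (rule ccontr)
      assume "\<not> \<rho> > \<beta> powr (1 / s)"
      then have "\<rho> powr r' \<le> (\<beta> powr (1 / s)) powr r'" using rpos pos by (intro powr_mono2) auto
      also have "\<dots> = \<beta> powr (r' / s)" by (simp add: powr_powr)
      finally have "C * \<rho> powr r' \<le> C * \<beta> powr (r' / s)" using pos by simp
      then show False using Crr tgt eta by (simp add: \<beta>_def)
    qed
    have "\<beta> < \<rho> powr s"
    proof -
      have "(\<beta> powr (1 / s)) powr s < \<rho> powr s" using gt pos by (intro powr_less_mono2) auto
      moreover have "(\<beta> powr (1 / s)) powr s = \<beta>"
        using \<beta>0 pos by (cases "\<beta> = 0") (simp_all add: powr_powr)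
      ultimately show ?thesis by simp
    qed
    then have "c * \<rho> powr s > B" using pos by (simp add: \<beta>_def field_simps)
    then obtain T where T: "\<And>t. t \<ge> T \<Longrightarrow> norm (\<theta> t) \<le> \<rho>" using ev rpos by blast
    have "eventually (\<lambda>t. ereal (mu_norm \<mu> (V (\<theta> t))) \<le> ereal tgt + ereal \<eta>) at_top"
      unfolding eventually_at_top_linorder
    proof (intro exI allI impI)
      fix t assume "t \<ge> T"
      then have "norm (\<theta> t) powr r' \<le> \<rho> powr r'" using T pos by (intro powr_mono2) auto
      then have "C * norm (\<theta> t) powr r' \<le> C * \<rho> powr r'" using pos by simp
      then have "mu_norm \<mu> (V (\<theta> t)) \<le> tgt + \<eta>" using bounds(2)[of "\<theta> t"] Crr by linarith
      then show "ereal (mu_norm \<mu> (V (\<theta> t))) \<le> ereal tgt + ereal \<eta>" by simp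
    qed
    then show "Limsup at_top (\<lambda>t. ereal (mu_norm \<mu> (V (\<theta> t)))) \<le> ereal tgt + ereal \<eta>"
      by (rule Limsup_bounded)
  qed
qed

end
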